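(* Let $d\in\mathbb{N}$, $\mathcal{D}_0=\mathcal{D}(\mathbb{R}^d)$, and let $\mathcal{D}_1,\mathcal{D}_2,\dots$ be the sets defined in the context. Then: (i) $\mathcal{D}_0\supseteq\mathcal{D}_1\supseteq\mathcal{D}_2\supseteq\cdots$; (ii) $\mathcal{D}_n\neq\varnothing$ for every $n\in\mathbb{N}$; (iii) $\bigcap_{n=0}^\infty\mathcal{D}_n=\varnothing$.
   Context: $\mathcal{D}(\mathbb{R}^d)$ is the space of $C^\infty$ functions $\mathbb{R}^d\to\mathbb{C}$ with compact support. For $\varphi\in\mathcal{D}_0$ let $R_\varphi=\sup\{\|x\|:x\in\mathbb{R}^d,\ \varphi(x)\neq0\}$ if $\varphi\neq0$ and $R_\varphi=1$ if $\varphi=0$. For $n\in\mathbb{N}$, $\mathcal{D}_n$ is the set of all $\varphi\in\mathcal{D}_0$ such that: $\varphi$ is real-valued; $\varphi(-x)=\varphi(x)$ for all $x\in\mathbb{R}^d$; $R_\varphi\le 1/n$; $\int_{\mathbb{R}^d}\varphi(x)\,dx=1$; $\int_{\mathbb{R}^d}x^\alpha\varphi(x)\,dx=0$ for all $\alpha\in\mathbb{N}_0^d$ with $1\le|\alpha|\le n$; $\int_{\mathbb{R}^d}|\varphi(x)|\,dx\le 1+\frac1n$; and $\sup_{x\in\mathbb{R}^d}|\partial^\alpha\varphi(x)|\le (R_\varphi)^{-2(|\alpha|+d)}$ for all $\alpha\in\mathbb{N}_0^d$ with $|\alpha|\le n$. *)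

theory Defs
  imports "HOL-Analysis.Analysis"
begin

text \<open>Points of R^d are vectors of type real^'n, with d = CARD('n).
  Partial derivative in direction of the i-th coordinate axis.\<close>
definition pdiff :: "'n::finite \<Rightarrow> (real^'n \<Rightarrow> complex) \<Rightarrow> real^'n \<Rightarrow> complex" where
  "pdiff i f = (\<lambda>x. vector_derivative (\<lambda>t. f (x + t *\<^sub>R axis i 1)) (at 0))"

fun iter_pd :: "'n::finite list \<Rightarrow> (real^'n \<Rightarrow> complex) \<Rightarrow> real^'n \<Rightarrow> complex" where
  "iter_pd [] f = f"
| "iter_pd (i # is) f = pdiff i (iter_pd is f)"

definition smooth_fun :: "(real^'n::finite \<Rightarrow> complex) \<Rightarrow> bool" where
  "smooth_fun f \<longleftrightarrow> (\<forall>is. continuous_on UNIV (iter_pd is f) \<and>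
      (\<forall>i x. (\<lambda>t. iter_pd is f (x + t *\<^sub>R axis i 1)) differentiable (at 0)))"

text \<open>Multi-index partial derivative: differentiate alpha i times in direction i
  (the order is irrelevant for smooth functions).\<close>
definition mpd :: "('n::finite \<Rightarrow> nat) \<Rightarrow> (real^'n \<Rightarrow> complex) \<Rightarrow> real^'n \<Rightarrow> complex" where
  "mpd \<alpha> f = iter_pd (SOME is. \<forall>i. count_list is i = \<alpha> i) f"

definition mabs :: "('n::finite \<Rightarrow> nat) \<Rightarrow> nat" where
  "mabs \<alpha> = (\<Sum>i\<in>UNIV. \<alpha> i)"

definition mono_pow :: "real^'n::finite \<Rightarrow> ('n \<Rightarrow> nat) \<Rightarrow> real" where
  "mono_pow x \<alpha> = (\<Prod>i\<in>UNIV. (x $ i) ^ \<alpha> i)"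

definition D0 :: "(real^'n::finite \<Rightarrow> complex) set" where
  "D0 = {f. smooth_fun f \<and> compact (closure {x. f x \<noteq> 0})}"

definition Rad :: "(real^'n::finite \<Rightarrow> complex) \<Rightarrow> real" where
  "Rad f = (if (\<forall>x. f x = 0) then 1 else Sup {norm x | x. f x \<noteq> 0})"

definition Dn :: "nat \<Rightarrow> (real^'n::finite \<Rightarrow> complex) set" where
  "Dn n = (if n = 0 then D0 else
     {\<phi> \<in> D0.
        (\<forall>x. Im (\<phi> x) = 0) \<and>
        (\<forall>x. \<phi> (- x) = \<phi> x) \<and>
        Rad \<phi> \<le> 1 / real n \<and>
        integral UNIV \<phi> = 1 \<and>
        (\<forall>\<alpha>. 1 \<le> mabs \<alpha> \<and> mabs \<alpha> \<le> n \<longrightarrow>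
            integral UNIV (\<lambda>x. complex_of_real (mono_pow x \<alpha>) * \<phi> x) = 0) \<and>
        integral UNIV (\<lambda>x. cmod (\<phi> x)) \<le> 1 + 1 / real n \<and>
        (\<forall>\<alpha>. mabs \<alpha> \<le> n \<longrightarrow>
            (\<forall>x. cmod (mpd \<alpha> \<phi> x) \<le> inverse (Rad \<phi> ^ (2 * (mabs \<alpha> + CARD('n))))))})"

end

theory Submission
  imports Defs "HOL-Analysis.Analysis" "HOL-Computational_Algebra.Polynomial"
begin

lemma Basis_cart_real: "(Basis :: (real^'n::finite) set) = range (\<lambda>j. axis j 1)"
  by (auto simp: Basis_vec_def)

lemma sum_basis_cart_nth:
  fixes g :: "real^'n::finite \<Rightarrow> real"
  shows "(\<Sum>b\<in>Basis. g b *\<^sub>R b) $ i = g (axis i 1)"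
proof -
  have "(\<Sum>b\<in>Basis. g b *\<^sub>R b) $ i = (\<Sum>b\<in>Basis. g b * (b $ i))" by (simp add: sum_component)
  also have "\<dots> = (\<Sum>j\<in>UNIV. g (axis j 1) * (axis j 1 $ i :: real))"
    unfolding Basis_cart_real by (subst sum.reindex) (auto simp: inj_on_def axis_eq_axis)
  also have "\<dots> = (\<Sum>j\<in>UNIV. if j = i then g (axis i 1) else 0)"
    by (rule sum.cong) (auto simp: axis_def)
  also have "\<dots> = g (axis i 1)" by simp
  finally show ?thesis .
qed

lemma prod_integral_cart:
  fixes f :: "'n::finite \<Rightarrow> real \<Rightarrow> real"
  assumes int: "\<And>i. integrable lborel (f i)"
  shows "integrable lborel (\<lambda>x::real^'n. \<Prod>i\<in>UNIV. f i (x$i))"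
    "(\<integral>x. (\<Prod>i\<in>UNIV. f i ((x::real^'n)$i)) \<partial>lborel) = (\<Prod>i\<in>UNIV. \<integral>t. f i t \<partial>lborel)"
proof -
  interpret P: product_sigma_finite "\<lambda>_::real^'n. lborel::real measure"
    by (simp add: product_sigma_finite_def lborel.sigma_finite_measure_axioms)
  define T where "T = (\<lambda>g::real^'n \<Rightarrow> real. \<Sum>b\<in>Basis. g b *\<^sub>R b)"
  have lb: "(lborel :: (real^'n) measure) = distr (\<Pi>\<^sub>M b\<in>Basis. lborel) borel T"
    unfolding T_def by (rule lborel_eq)
  have Tm: "T \<in> measurable (\<Pi>\<^sub>M b\<in>(Basis::(real^'n) set). lborel) borel"
    unfolding T_def by measurable
  have eq: "(\<Prod>i\<in>UNIV. f i (T g $ i)) = (\<Prod>b\<in>Basis. f (axis_index b) (g b))" for g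
  proof -
    have "(\<Prod>b\<in>Basis. f (axis_index b) (g b)) = (\<Prod>i\<in>UNIV. f i (g (axis i 1)))"
      unfolding Basis_cart_real by (subst prod.reindex) (auto simp: inj_on_def axis_eq_axis)
    moreover have "T g $ i = g (axis i 1)" for i unfolding T_def by (rule sum_basis_cart_nth)
    ultimately show ?thesis by simp
  qed
  have intP: "integrable (\<Pi>\<^sub>M b\<in>(Basis::(real^'n) set). lborel) (\<lambda>g. \<Prod>b\<in>Basis. f (axis_index b) (g b))"
    by (rule P.product_integrable_prod) (auto simp: int)
  have mF: "(\<lambda>x::real^'n. \<Prod>i\<in>UNIV. f i (x$i)) \<in> borel_measurable borel"
  proof -
    have "f i \<in> borel_measurable borel" for i using int[of i] by auto
    then show ?thesis by measurable
  qed
  show I: "integrable lborel (\<lambda>x::real^'n. \<Prod>i\<in>UNIV. f i (x$i))"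
    unfolding lb using intP mF Tm by (subst integrable_distr_eq) (auto simp: eq)
  have "(\<integral>x. (\<Prod>i\<in>UNIV. f i ((x::real^'n)$i)) \<partial>lborel)
      = (\<integral>g. (\<Prod>b\<in>Basis. f (axis_index b) (g b)) \<partial>(\<Pi>\<^sub>M b\<in>(Basis::(real^'n) set). lborel))"
    unfolding lb using mF Tm by (subst integral_distr) (auto simp: eq)
  also have "\<dots> = (\<Prod>b\<in>(Basis::(real^'n) set). \<integral>t. f (axis_index b) t \<partial>lborel)"
    by (rule P.product_integral_prod) (auto simp: int)
  also have "\<dots> = (\<Prod>i\<in>UNIV. \<integral>t. f i t \<partial>lborel)"
    unfolding Basis_cart_real by (subst prod.reindex) (auto simp: inj_on_def axis_eq_axis)
  finally show "(\<integral>x. (\<Prod>i\<in>UNIV. f i ((x::real^'n)$i)) \<partial>lborel) = (\<Prod>i\<in>UNIV. \<integral>t. f i t \<partial>lborel)" .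
qed


lemma poly_exp_top: "((\<lambda>t::real. poly q t * exp (- t)) \<longlongrightarrow> 0) at_top"
proof -
  have "((\<lambda>t::real. \<Sum>i\<le>degree q. coeff q i * (t ^ i / exp t)) \<longlongrightarrow> (\<Sum>i\<le>degree q. coeff q i * 0)) at_top"
    by (intro tendsto_intros tendsto_power_div_exp_0)
  moreover have "poly q t * exp (- t) = (\<Sum>i\<le>degree q. coeff q i * (t ^ i / exp t))" for t
  proof -
    have "poly q t * exp (- t) = poly q t / exp t" by (simp add: exp_minus field_simps)
    also have "\<dots> = (\<Sum>i\<le>degree q. coeff q i * t ^ i / exp t)"
      by (simp add: poly_altdef sum_divide_distrib)
    finally show ?thesis by simp
  qed
  ultimately show ?thesis by simp
qed

definition EP :: "real poly \<Rightarrow> real \<Rightarrow> real" where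
  "EP p x = (if x > 0 then poly p (1/x) * exp (- (1/x)) else 0)"

definition EQ :: "real poly \<Rightarrow> real poly" where
  "EQ p = [:0,0,1:] * (p - pderiv p)"

lemma E_deriv: "(EP p has_real_derivative EP (EQ p) x) (at x)"
proof (cases "x > 0")
  case True
  have "((\<lambda>x. poly p (1/x) * exp (- (1/x))) has_real_derivative
     (poly (pderiv p) (1/x) * (- 1/x^2) * exp (- (1/x)) + poly p (1/x) * (exp (- (1/x)) * (1/x^2)))) (at x)"
    using True
    by (auto intro!: derivative_eq_intros DERIV_chain2[OF poly_DERIV] simp: power2_eq_square field_simps)
  moreover have "poly (pderiv p) (1/x) * (- 1/x^2) * exp (- (1/x)) + poly p (1/x) * (exp (- (1/x)) * (1/x^2)) = EP (EQ p) x"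
    using True by (simp add: EP_def EQ_def field_simps power2_eq_square)
  ultimately show ?thesis
    by (rule_tac has_field_derivative_transform_within_open[where S="{0<..}"]) (auto simp: EP_def True)
next
  case False
  show ?thesis
  proof (cases "x < 0")
    case True
    have "((\<lambda>x. 0) has_real_derivative 0) (at x)" by simp
    then show ?thesis using True
      by (rule_tac has_field_derivative_transform_within_open[where S="{..<0}"]) (auto simp: EP_def)
  next
    case False
    with \<open>\<not> x > 0\<close> have x0: "x = 0" by simp
    have "EP (EQ p) 0 = 0" by (simp add: EP_def)
    moreover have "((\<lambda>y. (EP p y - EP p 0) / (y - 0)) \<longlongrightarrow> 0) (at (0::real))"
    proof (rule filterlim_split_at)
      show "((\<lambda>y. (EP p y - EP p 0) / (y - 0)) \<longlongrightarrow> 0) (at_left (0::real))"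
        by (rule tendsto_eventually) (auto simp: EP_def eventually_at_left_field intro!: exI[of _ "-1"])
      have "((\<lambda>t. poly (pCons 0 p) t * exp (- t)) \<longlongrightarrow> 0) at_top" by (rule poly_exp_top)
      then have "((\<lambda>t. (EP p (inverse t) - EP p 0) / (inverse t - 0)) \<longlongrightarrow> 0) at_top"
        by (rule Lim_transform_eventually)
          (auto simp: EP_def eventually_at_top_linorder field_simps intro!: exI[of _ 1])
      then show "((\<lambda>y. (EP p y - EP p 0) / (y - 0)) \<longlongrightarrow> 0) (at_right (0::real))"
        by (simp add: filterlim_at_right_to_top)
    qed
    ultimately show ?thesis unfolding x0 by (simp add: has_field_derivative_iff)
  qed
qed


fun hdk :: "nat \<Rightarrow> (real \<Rightarrow> real) \<Rightarrow> bool" where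
  "hdk 0 f = True"
| "hdk (Suc k) f = ((\<forall>x. f differentiable (at x)) \<and> hdk k (deriv f))"

definition sm :: "(nat \<Rightarrow> real \<Rightarrow> real) \<Rightarrow> bool" where
  "sm D \<longleftrightarrow> (\<forall>m x. (D m has_real_derivative D (Suc m) x) (at x))"

lemma deriv_fun_eq:
  assumes "\<And>x. (f has_real_derivative g x) (at x)" shows "deriv f = g"
  using assms by (auto intro!: ext DERIV_imp_deriv)

lemma sm_hd: "sm D \<Longrightarrow> hdk k (D 0)"
proof (induction k arbitrary: D)
  case 0 then show ?case by simp
next
  case (Suc k)
  have d: "\<And>x. (D 0 has_real_derivative D 1 x) (at x)" using Suc.prems by (simp add: sm_def)
  have "sm (\<lambda>m. D (Suc m))" using Suc.prems by (simp add: sm_def)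
  from Suc.IH[OF this] have "hdk k (D 1)" by simp
  moreover have "deriv (D 0) = D 1" by (rule deriv_fun_eq[OF d])
  ultimately show ?case using d by (auto simp: real_differentiable_def)
qed

lemma hd_mono: "hdk (Suc k) f \<Longrightarrow> hdk k f"
  by (induction k arbitrary: f) auto

lemma hd_deriv_pow: "hdk (k + m) f \<Longrightarrow> hdk k ((deriv ^^ m) f)"
proof (induction m arbitrary: f)
  case 0 then show ?case by simp
next
  case (Suc m)
  then have "hdk (k + m) (deriv f)" by simp
  from Suc.IH[OF this] show ?case by (simp add: funpow_Suc_right del: funpow.simps)
qed

lemma hd_sm: assumes "\<forall>k. hdk k f" shows "sm (\<lambda>m. (deriv ^^ m) f)"
  unfolding sm_def
proof (intro allI)
  fix m x
  have "hdk (Suc 0) ((deriv ^^ m) f)" using assms hd_deriv_pow[of "Suc 0" m f] by simp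
  then have "(deriv ^^ m) f differentiable (at x)" by simp
  then show "((deriv ^^ m) f has_real_derivative (deriv ^^ Suc m) f x) (at x)"
    by (simp add: DERIV_deriv_iff_real_differentiable)
qed

lemma DERIV_affine_comp:
  assumes "\<And>y. (f has_real_derivative f' y) (at y)"
  shows "((\<lambda>t. f (a * t + c)) has_real_derivative a * f' (a * x + c)) (at x)"
proof -
  have "((\<lambda>t. a * t + c) has_real_derivative a) (at x)" by (auto intro!: derivative_eq_intros)
  from DERIV_chain2[OF assms this] show ?thesis by (simp add: mult.commute)
qed

lemma hd_add: "hdk k f \<Longrightarrow> hdk k g \<Longrightarrow> hdk k (\<lambda>x. f x + g x)"
proof (induction k arbitrary: f g)
  case 0 then show ?case by simp
next
  case (Suc k)
  have "deriv (\<lambda>x. f x + g x) = (\<lambda>x. deriv f x + deriv g x)"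
    using Suc.prems by (intro deriv_fun_eq DERIV_add) (auto simp: DERIV_deriv_iff_real_differentiable)
  then show ?case using Suc by (auto intro!: Suc.IH)
qed

lemma hd_mult: "hdk k f \<Longrightarrow> hdk k g \<Longrightarrow> hdk k (\<lambda>x. f x * g x)"
proof (induction k arbitrary: f g)
  case 0 then show ?case by simp
next
  case (Suc k)
  have "deriv (\<lambda>x. f x * g x) = (\<lambda>x. deriv f x * g x + f x * deriv g x)"
  proof (rule deriv_fun_eq)
    fix x
    have "(f has_real_derivative deriv f x) (at x)" "(g has_real_derivative deriv g x) (at x)"
      using Suc.prems by (auto simp: DERIV_deriv_iff_real_differentiable)
    from DERIV_mult[OF this] show "((\<lambda>x. f x * g x) has_real_derivative deriv f x * g x + f x * deriv g x) (at x)"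
      by (simp add: mult.commute)
  qed
  moreover have "hdk k f" "hdk k g" using Suc.prems hd_mono by blast+
  ultimately show ?case using Suc by (auto intro!: Suc.IH hd_add)
qed

lemma sm_E: "sm (\<lambda>m. EP ((EQ ^^ m) p))"
  by (simp add: sm_def E_deriv)

definition b0 :: "real \<Rightarrow> real" where
  "b0 t = EP 1 (1 + t) * EP 1 (1 - t)"

lemma b0_smooth: "sm (\<lambda>m. (deriv ^^ m) b0)"
proof (rule hd_sm, rule allI)
  fix k
  have s1: "sm (\<lambda>m t. EP ((EQ ^^ m) 1) (1 + t))"
    unfolding sm_def using DERIV_affine_comp[OF E_deriv, of _ 1 1] by (simp add: add.commute)
  have s2: "sm (\<lambda>m t. (-1)^m * EP ((EQ ^^ m) 1) (1 - t))"
    unfolding sm_def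
  proof (intro allI)
    fix m x
    have "((\<lambda>t. EP ((EQ ^^ m) 1) (1 - t)) has_real_derivative - EP (EQ ((EQ ^^ m) 1)) (1 - x)) (at x)"
      using DERIV_affine_comp[OF E_deriv, of "(EQ ^^ m) 1" "-1" 1 x] by (simp add: add.commute)
    from DERIV_cmult[OF this, of "(-1)^m"]
    show "((\<lambda>t. (-1)^m * EP ((EQ ^^ m) 1) (1 - t)) has_real_derivative (-1)^Suc m * EP ((EQ ^^ Suc m) 1) (1 - x)) (at x)"
      by simp
  qed
  show "hdk k b0" unfolding b0_def using hd_mult[OF sm_hd[OF s1] sm_hd[OF s2]] by simp
qed

lemma b0_supp: "b0 t \<noteq> 0 \<Longrightarrow> -1 < t \<and> t < 1"
  by (auto simp: b0_def EP_def split: if_splits)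

lemma b0_nonneg: "b0 t \<ge> 0"
  by (auto simp: b0_def EP_def)

lemma b0_even: "b0 (- t) = b0 t"
  by (simp add: b0_def)

lemma b0_pos: "b0 0 > 0"
  by (simp add: b0_def EP_def)


lemma sm_cont: "sm D \<Longrightarrow> continuous_on UNIV (D m)"
  unfolding sm_def by (meson DERIV_isCont continuous_at_imp_continuous_on)

lemma sm_supp:
  assumes "sm D" "\<And>t. \<bar>t\<bar> > r \<Longrightarrow> D 0 t = 0"
  shows "\<bar>t\<bar> > r \<Longrightarrow> D m t = 0"
proof (induction m arbitrary: t)
  case 0 then show ?case using assms(2) by simp
next
  case (Suc m)
  have "((\<lambda>_. 0) has_real_derivative 0) (at t)" by simp
  then have "(D m has_real_derivative 0) (at t)"
    by (rule has_field_derivative_transform_within_open[where S="{t. \<bar>t\<bar> > r}"])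
      (auto simp: Suc.prems Suc.IH intro!: open_Collect_less continuous_intros)
  moreover have "(D m has_real_derivative D (Suc m) t) (at t)" using assms(1) by (simp add: sm_def)
  ultimately show ?case by (metis DERIV_unique)
qed

lemma integrable_cs:
  fixes g :: "real \<Rightarrow> real"
  assumes "continuous_on UNIV g" "\<And>t. \<bar>t\<bar> > r \<Longrightarrow> g t = 0"
  shows "integrable lborel g"
proof -
  have "integrable lborel (\<lambda>x. indicator {-r..r} x *\<^sub>R g x)"
    by (rule borel_integrable_compact) (auto intro: continuous_on_subset[OF assms(1)])
  moreover have "(\<lambda>x. indicator {-r..r} x *\<^sub>R g x) = g"
  proof (rule ext)
    fix x
    show "indicator {-r..r} x *\<^sub>R g x = g x"
    proof (cases "x \<in> {-r..r}")
      case False then have "\<bar>x\<bar> > r" by auto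
      then show ?thesis using assms(2) by simp
    qed simp
  qed
  ultimately show ?thesis by simp
qed

definition BD :: "nat \<Rightarrow> real \<Rightarrow> real" where "BD m = (deriv ^^ m) b0"

lemma sm_B: "sm BD" unfolding BD_def by (rule b0_smooth)
lemma B0: "BD 0 = b0" by (simp add: BD_def)
lemma B_supp: "\<bar>t\<bar> > 1 \<Longrightarrow> BD m t = 0"
proof (rule sm_supp[OF sm_B])
  fix t :: real assume "\<bar>t\<bar> > 1" then show "BD 0 t = 0" using b0_supp[of t] by (auto simp: B0 abs_if split: if_splits)
qed

primrec GR :: "real \<Rightarrow> nat \<Rightarrow> nat \<Rightarrow> real \<Rightarrow> real" where
  "GR s 0 m t = BD m t"
| "GR s (Suc p) m t = (s ^ Suc p * GR s p m t - GR s p m (t / s) / s ^ (m + 1)) / (s ^ Suc p - 1)"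

lemma sm_G: assumes "0 < s" shows "sm (GR s p)"
proof (induction p)
  case 0
  have "GR s 0 = BD" by (intro ext) simp
  then show ?case using sm_B by simp
next
  case (Suc p)
  show ?case unfolding sm_def
  proof (intro allI)
    fix m x
    have d1: "\<And>y. (GR s p m has_real_derivative GR s p (Suc m) y) (at y)" using Suc by (simp add: sm_def)
    have d2: "((\<lambda>t. GR s p m ((1/s) * t + 0)) has_real_derivative (1/s) * GR s p (Suc m) ((1/s) * x + 0)) (at x)"
      by (rule DERIV_affine_comp[OF d1])
    have fe: "(\<lambda>t. GR s p m ((1/s) * t + 0)) = (\<lambda>t. GR s p m (t/s))" by simp
    have d2': "((\<lambda>t. GR s p m (t/s)) has_real_derivative (1/s) * GR s p (Suc m) (x/s)) (at x)"
      using d2 unfolding fe by simp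
    have ve: "(1/s) * GR s p (Suc m) (x/s) / s ^ (m+1) = GR s p (Suc m) (x/s) / s ^ (Suc m + 1)"
      using assms by simp
    have d3: "((\<lambda>t. GR s p m (t/s) / s ^ (m+1)) has_real_derivative GR s p (Suc m) (x/s) / s ^ (Suc m + 1)) (at x)"
      using DERIV_cdivide[OF d2', of "s^(m+1)"] unfolding ve .
    show "(GR s (Suc p) m has_real_derivative GR s (Suc p) (Suc m) x) (at x)"
      unfolding GR.simps
      by (rule DERIV_cdivide, rule DERIV_diff[OF DERIV_cmult[OF d1] d3])
  qed
qed

lemma G_supp: assumes "0 < s" "s < 1" shows "\<bar>t\<bar> > 1 \<Longrightarrow> GR s p m t = 0"
proof (induction p arbitrary: t)
  case 0 then show ?case by (simp add: B_supp)
next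
  case (Suc p)
  have "\<bar>t / s\<bar> > 1" using Suc.prems assms by (auto simp: abs_divide field_simps)
  then have "GR s p m (t / s) = 0" by (rule Suc.IH)
  moreover have "GR s p m t = 0" by (rule Suc.IH[OF Suc.prems])
  ultimately show ?case by (simp only: GR.simps) simp
qed

lemma G_even: "GR s p 0 (- t) = GR s p 0 t"
proof (induction p arbitrary: t)
  case 0 then show ?case by (simp add: B0 b0_even)
next
  case (Suc p)
  have "GR s p 0 (- t / s) = GR s p 0 (t / s)" using Suc.IH[of "t/s"] by simp
  then show ?case by (simp only: GR.simps Suc.IH)
qed

lemma G_cont: "0 < s \<Longrightarrow> continuous_on UNIV (GR s p m)"
  using sm_cont[OF sm_G] by blast

lemma int_G: assumes "0 < s" "s < 1" shows "integrable lborel (\<lambda>t. t ^ j * GR s p m t)"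
  by (rule integrable_cs[where r=1]) (auto intro!: continuous_intros G_cont assms simp: G_supp[OF assms])

lemma int_G_abs: assumes "0 < s" "s < 1" shows "integrable lborel (\<lambda>t. \<bar>GR s p m t\<bar>)"
  by (rule integrable_cs[where r=1]) (auto intro!: continuous_intros G_cont assms simp: G_supp[OF assms])

lemma dil_integral:
  fixes F :: "real \<Rightarrow> real"
  assumes "0 < s"
  shows "(\<integral>t. F (t / s) / s \<partial>lborel) = (\<integral>t. F t \<partial>lborel)"
proof -
  have "(\<integral>t. F (t / s) / s \<partial>lborel) = \<bar>s\<bar> *\<^sub>R (\<integral>x. F ((0 + s * x) / s) / s \<partial>lborel)"
    using assms by (intro lborel_integral_real_affine) simp
  also have "\<dots> = (\<integral>t. F t \<partial>lborel)" using assms by simp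
  finally show ?thesis .
qed

definition Mom :: "real \<Rightarrow> nat \<Rightarrow> nat \<Rightarrow> real" where
  "Mom s p j = (\<integral>t. t ^ j * GR s p 0 t \<partial>lborel)"

lemma Mom_Suc: assumes "0 < s" "s < 1"
  shows "Mom s (Suc p) j = (s ^ Suc p - s ^ j) / (s ^ Suc p - 1) * Mom s p j"
proof -
  have i1: "integrable lborel (\<lambda>t. t ^ j * GR s p 0 t)" by (rule int_G[OF assms])
  have i2: "integrable lborel (\<lambda>t. t ^ j * (GR s p 0 (t/s) / s))"
  proof (rule integrable_cs[where r=1])
    show "continuous_on UNIV (\<lambda>t. t ^ j * (GR s p 0 (t / s) / s))"
      using assms by (intro continuous_intros continuous_on_compose2[OF G_cont]) auto
    fix t :: real assume "\<bar>t\<bar> > 1"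
    then have "\<bar>t / s\<bar> > 1" using assms by (auto simp: abs_divide field_simps)
    then show "t ^ j * (GR s p 0 (t / s) / s) = 0" using G_supp[OF assms] by simp
  qed
  have e: "(\<integral>t. t ^ j * (GR s p 0 (t/s) / s) \<partial>lborel) = s ^ j * Mom s p j"
  proof -
    have "(\<integral>t. t ^ j * (GR s p 0 (t/s) / s) \<partial>lborel) = (\<integral>t. (s * (t/s)) ^ j * GR s p 0 (t/s) / s \<partial>lborel)"
      using assms by simp
    also have "\<dots> = (\<integral>t. (s * t) ^ j * GR s p 0 t \<partial>lborel)"
      by (rule dil_integral[OF assms(1), where F="\<lambda>u. (s * u) ^ j * GR s p 0 u"])
    also have "\<dots> = s ^ j * Mom s p j" by (simp add: Mom_def power_mult_distrib mult.assoc)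
    finally show ?thesis .
  qed
  have "Mom s (Suc p) j = (\<integral>t. (s ^ Suc p * (t ^ j * GR s p 0 t) - t ^ j * (GR s p 0 (t/s) / s)) / (s ^ Suc p - 1) \<partial>lborel)"
    unfolding Mom_def by (rule Bochner_Integration.integral_cong) (auto simp: field_simps)
  also have "\<dots> = (\<integral>t. (s ^ Suc p * (t ^ j * GR s p 0 t) - t ^ j * (GR s p 0 (t/s) / s)) \<partial>lborel) / (s ^ Suc p - 1)"
    by (rule integral_divide_zero)
  also have "(\<integral>t. (s ^ Suc p * (t ^ j * GR s p 0 t) - t ^ j * (GR s p 0 (t/s) / s)) \<partial>lborel)
      = (\<integral>t. s ^ Suc p * (t ^ j * GR s p 0 t) \<partial>lborel) - (\<integral>t. t ^ j * (GR s p 0 (t/s) / s) \<partial>lborel)"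
    by (rule Bochner_Integration.integral_diff) (use i1 i2 in auto)
  also have "(\<integral>t. s ^ Suc p * (t ^ j * GR s p 0 t) \<partial>lborel) = s ^ Suc p * Mom s p j"
    unfolding Mom_def by (rule integral_mult_right_zero)
  finally have "Mom s (Suc p) j = (s ^ Suc p * Mom s p j - s ^ j * Mom s p j) / (s ^ Suc p - 1)"
    using e by simp
  then show ?thesis by (metis left_diff_distrib times_divide_eq_left)
qed

lemma s_pow_lt1: "0 < s \<Longrightarrow> s < 1 \<Longrightarrow> s ^ Suc p < (1::real)"
  by (rule power_Suc_less_one)

lemma Mom_zero: assumes "0 < s" "s < 1" shows "1 \<le> j \<Longrightarrow> j \<le> p \<Longrightarrow> Mom s p j = 0"
proof (induction p)
  case 0 then show ?case by simp
next
  case (Suc p)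
  show ?case
  proof (cases "j = Suc p")
    case True then show ?thesis by (simp add: Mom_Suc[OF assms])
  next
    case False then show ?thesis using Suc by (simp add: Mom_Suc[OF assms])
  qed
qed

lemma Mom_0: assumes "0 < s" "s < 1" shows "Mom s p 0 = Mom s 0 0"
proof (induction p)
  case 0 then show ?case by simp
next
  case (Suc p)
  have "s ^ Suc p - 1 \<noteq> 0" using s_pow_lt1[OF assms, of p] by simp
  then show ?case using Suc by (simp add: Mom_Suc[OF assms])
qed

definition AB :: "real \<Rightarrow> nat \<Rightarrow> real" where
  "AB s p = (\<integral>t. \<bar>GR s p 0 t\<bar> \<partial>lborel)"

lemma A_Suc: assumes "0 < s" "s < 1"
  shows "AB s (Suc p) \<le> (s ^ Suc p + 1) / (1 - s ^ Suc p) * AB s p"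
proof -
  define q where "q = s ^ Suc p"
  have q: "0 < q" "q < 1" using assms s_pow_lt1[OF assms] by (auto simp: q_def)
  have i1: "integrable lborel (\<lambda>t. \<bar>GR s p 0 t\<bar>)" by (rule int_G_abs[OF assms])
  have i2: "integrable lborel (\<lambda>t. \<bar>GR s p 0 (t/s) / s\<bar>)"
  proof (rule integrable_cs[where r=1])
    show "continuous_on UNIV (\<lambda>t. \<bar>GR s p 0 (t / s) / s\<bar>)"
      using assms by (intro continuous_intros continuous_on_compose2[OF G_cont]) auto
    fix t :: real assume "\<bar>t\<bar> > 1"
    then have "\<bar>t / s\<bar> > 1" using assms by (auto simp: abs_divide field_simps)
    then show "\<bar>GR s p 0 (t / s) / s\<bar> = 0" using G_supp[OF assms] by simp
  qed
  have e: "(\<integral>t. \<bar>GR s p 0 (t/s) / s\<bar> \<partial>lborel) = AB s p"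
  proof -
    have "(\<integral>t. \<bar>GR s p 0 (t/s) / s\<bar> \<partial>lborel) = (\<integral>t. \<bar>GR s p 0 (t/s)\<bar> / s \<partial>lborel)"
      using assms by (simp add: abs_divide)
    also have "\<dots> = AB s p" unfolding AB_def by (rule dil_integral[OF assms(1)])
    finally show ?thesis .
  qed
  have "AB s (Suc p) \<le> (\<integral>t. (q * \<bar>GR s p 0 t\<bar> + \<bar>GR s p 0 (t/s) / s\<bar>) / (1 - q) \<partial>lborel)"
    unfolding AB_def
  proof (rule integral_mono)
    show "integrable lborel (\<lambda>t. \<bar>GR s (Suc p) 0 t\<bar>)" by (rule int_G_abs[OF assms])
    show "integrable lborel (\<lambda>t. (q * \<bar>GR s p 0 t\<bar> + \<bar>GR s p 0 (t/s) / s\<bar>) / (1 - q))"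
      using i1 i2 by auto
    fix t
    have "\<bar>GR s (Suc p) 0 t\<bar> = \<bar>q * GR s p 0 t - GR s p 0 (t/s) / s\<bar> / (1 - q)"
      using q by (simp add: q_def abs_divide abs_minus_commute)
    also have "\<dots> \<le> (q * \<bar>GR s p 0 t\<bar> + \<bar>GR s p 0 (t/s) / s\<bar>) / (1 - q)"
      using q by (intro divide_right_mono) (auto simp: abs_mult intro: order.trans[OF abs_triangle_ineq4])
    finally show "\<bar>GR s (Suc p) 0 t\<bar> \<le> (q * \<bar>GR s p 0 t\<bar> + \<bar>GR s p 0 (t/s) / s\<bar>) / (1 - q)" .
  qed
  also have "\<dots> = (q * AB s p + AB s p) / (1 - q)"
    using i1 i2 e by (simp add: AB_def)
  finally show ?thesis by (simp add: q_def field_simps)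
qed

lemma A_bound: assumes "0 < s" "s < 1"
  shows "AB s p \<le> ((1 + s) / (1 - s)) ^ p * AB s 0"
proof (induction p)
  case 0 then show ?case by simp
next
  case (Suc p)
  have A0: "AB s p \<ge> 0" unfolding AB_def by simp
  have "s ^ Suc p \<le> s" using assms by (simp add: power_le_one mult_left_le)
  then have f: "(s ^ Suc p + 1) / (1 - s ^ Suc p) \<le> (1 + s) / (1 - s)"
    using assms s_pow_lt1[OF assms, of p] by (simp add: frac_le)
  have "AB s (Suc p) \<le> (s ^ Suc p + 1) / (1 - s ^ Suc p) * AB s p" by (rule A_Suc[OF assms])
  also have "\<dots> \<le> (1 + s) / (1 - s) * (((1 + s) / (1 - s)) ^ p * AB s 0)"
    using f Suc A0 assms s_pow_lt1[OF assms, of p] by (intro mult_mono) auto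
  finally show ?case by simp
qed

lemma b0_int_pos: "(\<integral>t. b0 t \<partial>lborel) > 0"
proof -
  have "isCont b0 0" using sm_cont[OF b0_smooth, of 0] by (simp add: continuous_on_eq_continuous_at)
  then have "(b0 \<longlongrightarrow> b0 0) (at 0)" by (simp add: isCont_def)
  moreover have "b0 0 / 2 < b0 0" using b0_pos by simp
  ultimately have "\<forall>\<^sub>F t in at 0. b0 0 / 2 < b0 t" by (rule order_tendstoD(1))
  then obtain d where d0: "d > 0" and dd: "\<And>t. t \<noteq> 0 \<Longrightarrow> dist t 0 < d \<Longrightarrow> b0 0 / 2 < b0 t"
    unfolding eventually_at by auto
  have d2: "b0 0 / 2 < b0 t" if "\<bar>t\<bar> < d" for t
  proof (cases "t = 0")
    case True then show ?thesis using b0_pos by simp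
  next
    case False then show ?thesis using dd[of t] that by (simp add: dist_real_def)
  qed
  note d = d0 d2
  have ib: "integrable lborel b0"
  proof (rule integrable_cs[where r=1])
    show "continuous_on UNIV b0" using sm_cont[OF b0_smooth, of 0] by simp
    fix t :: real assume "\<bar>t\<bar> > 1" then show "b0 t = 0" using b0_supp[of t] by (auto simp: abs_if split: if_splits)
  qed
  have "(\<integral>t. (b0 0 / 2) * indicator {-d/2..d/2} t \<partial>lborel) \<le> (\<integral>t. b0 t \<partial>lborel)"
  proof (rule integral_mono)
    show "integrable lborel (\<lambda>t. (b0 0 / 2) * indicator {-d/2..d/2} t)" using d0 by (intro integrable_mult_right integrable_real_indicator) auto
    show "integrable lborel b0" by (rule ib)
    fix t show "(b0 0 / 2) * indicator {-d/2..d/2} t \<le> b0 t"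
    proof (cases "t \<in> {-d/2..d/2}")
      case True then have "\<bar>t\<bar> < d" using d by auto
      then show ?thesis using d(2)[of t] True by auto
    qed (simp add: b0_nonneg)
  qed
  moreover have "(\<integral>t. (b0 0 / 2) * indicator {-d/2..d/2} t \<partial>lborel) = b0 0 / 2 * d"
    using d by simp
  moreover have "b0 0 / 2 * d > 0" using d b0_pos by simp
  ultimately show ?thesis by linarith
qed


definition cnz :: real where "cnz = (\<integral>t. b0 t \<partial>lborel)"

lemma c0_pos: "cnz > 0" unfolding cnz_def by (rule b0_int_pos)

definition HH :: "real \<Rightarrow> nat \<Rightarrow> real \<Rightarrow> nat \<Rightarrow> real \<Rightarrow> real" where
  "HH s n a m t = GR s n m (t / a) / cnz / a ^ (m + 1)"

context
  fixes s a :: real and n :: nat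
  assumes s0: "0 < s" and s1: "s < 1" and a0: "0 < a"
begin

lemma sm_HH: "sm (HH s n a)"
  unfolding sm_def
proof (intro allI)
  fix m x
  have d1: "\<And>y. (GR s n m has_real_derivative GR s n (Suc m) y) (at y)" using sm_G[OF s0] by (simp add: sm_def)
  have d2: "((\<lambda>t. GR s n m ((1/a) * t + 0)) has_real_derivative (1/a) * GR s n (Suc m) ((1/a) * x + 0)) (at x)"
    by (rule DERIV_affine_comp[OF d1])
  have fe: "(\<lambda>t. GR s n m ((1/a) * t + 0)) = (\<lambda>t. GR s n m (t/a))" by simp
  have d2': "((\<lambda>t. GR s n m (t/a)) has_real_derivative (1/a) * GR s n (Suc m) (x/a)) (at x)"
    using d2 unfolding fe by simp
  have ve: "(1/a) * GR s n (Suc m) (x/a) / (cnz * a ^ (m+1)) = HH s n a (Suc m) x"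
    using a0 by (simp add: HH_def)
  have fe2: "HH s n a m = (\<lambda>t. GR s n m (t/a) / (cnz * a ^ (m+1)))"
    by (simp add: HH_def fun_eq_iff)
  show "(HH s n a m has_real_derivative HH s n a (Suc m) x) (at x)"
    using DERIV_cdivide[OF d2', of "cnz * a^(m+1)"] unfolding ve fe2 .
qed

lemma HH_cont: "continuous_on UNIV (HH s n a m)"
  by (rule sm_cont[OF sm_HH])

lemma HH_supp: "\<bar>t\<bar> > a \<Longrightarrow> HH s n a m t = 0"
proof -
  assume "\<bar>t\<bar> > a"
  then have "\<bar>t / a\<bar> > 1" using a0 by (simp add: abs_divide)
  then show ?thesis using G_supp[OF s0 s1] by (simp add: HH_def)
qed

lemma HH_even: "HH s n a 0 (- t) = HH s n a 0 t"
  using G_even[of s n "t/a"] by (simp add: HH_def)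

lemma int_HH: "integrable lborel (\<lambda>t. t ^ j * HH s n a m t)"
  by (rule integrable_cs[where r=a]) (auto intro!: continuous_intros HH_cont simp: HH_supp)

lemma int_HH_abs: "integrable lborel (\<lambda>t. \<bar>HH s n a m t\<bar>)"
  by (rule integrable_cs[where r=a]) (auto intro!: continuous_intros HH_cont simp: HH_supp)

lemma HH_mom: "(\<integral>t. t ^ j * HH s n a 0 t \<partial>lborel) = a ^ j * Mom s n j / cnz"
proof -
  have "(\<integral>t. t ^ j * HH s n a 0 t \<partial>lborel) = (\<integral>t. (a * (t/a)) ^ j * (GR s n 0 (t/a) / cnz) / a \<partial>lborel)"
    using a0 by (simp add: HH_def)
  also have "\<dots> = (\<integral>t. (a * t) ^ j * (GR s n 0 t / cnz) \<partial>lborel)"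
    by (rule dil_integral[OF a0, where F="\<lambda>u. (a * u) ^ j * (GR s n 0 u / cnz)"])
  also have "\<dots> = (\<integral>t. a ^ j * (t ^ j * GR s n 0 t) / cnz \<partial>lborel)"
    by (simp add: power_mult_distrib mult.assoc)
  also have "\<dots> = (\<integral>t. a ^ j * (t ^ j * GR s n 0 t) \<partial>lborel) / cnz"
    by (rule integral_divide_zero)
  also have "\<dots> = a ^ j * Mom s n j / cnz"
    unfolding Mom_def by (subst integral_mult_right_zero) simp
  finally show ?thesis .
qed

lemma HH_int1: "(\<integral>t. HH s n a 0 t \<partial>lborel) = 1"
proof -
  have "Mom s 0 0 = cnz" by (simp add: Mom_def cnz_def B0)
  then have "Mom s n 0 = cnz" using Mom_0[OF s0 s1, of n] by simp
  then show ?thesis using HH_mom[of 0] c0_pos by simp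
qed

lemma HH_mom0: "1 \<le> j \<Longrightarrow> j \<le> n \<Longrightarrow> (\<integral>t. t ^ j * HH s n a 0 t \<partial>lborel) = 0"
proof -
  assume "1 \<le> j" "j \<le> n"
  then have "Mom s n j = 0" by (rule Mom_zero[OF s0 s1])
  then show ?thesis by (simp add: HH_mom)
qed

lemma HH_abs: "(\<integral>t. \<bar>HH s n a 0 t\<bar> \<partial>lborel) \<le> ((1 + s) / (1 - s)) ^ n"
proof -
  have "(\<integral>t. \<bar>HH s n a 0 t\<bar> \<partial>lborel) = (\<integral>t. \<bar>GR s n 0 (t/a) / cnz\<bar> / a \<partial>lborel)"
    using a0 c0_pos by (simp add: HH_def abs_divide abs_mult)
  also have "\<dots> = (\<integral>t. \<bar>GR s n 0 t / cnz\<bar> \<partial>lborel)"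
    by (rule dil_integral[OF a0, where F="\<lambda>u. \<bar>GR s n 0 u / cnz\<bar>"])
  also have "\<dots> = (\<integral>t. \<bar>GR s n 0 t\<bar> / cnz \<partial>lborel)"
    using c0_pos by (simp add: abs_divide)
  also have "\<dots> = AB s n / cnz"
    unfolding AB_def by (rule integral_divide_zero)
  also have "\<dots> \<le> ((1 + s) / (1 - s)) ^ n * AB s 0 / cnz"
    using A_bound[OF s0 s1, of n] c0_pos by (simp add: divide_right_mono)
  also have "AB s 0 = cnz" by (simp add: AB_def cnz_def B0 b0_nonneg)
  finally show ?thesis using c0_pos by simp
qed

end

lemma G_bounded: assumes "0 < s" "s < 1" shows "\<exists>C. \<forall>t. \<bar>GR s p m t\<bar> \<le> C"
proof -
  have "compact (GR s p m ` {-1..1})"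
    by (rule compact_continuous_image) (auto intro: continuous_on_subset[OF G_cont[OF assms(1)]])
  then obtain C where C: "\<And>y. y \<in> GR s p m ` {-1..1} \<Longrightarrow> norm y \<le> C"
    by (meson bounded_iff compact_imp_bounded)
  have "\<bar>GR s p m t\<bar> \<le> C" for t
  proof (cases "\<bar>t\<bar> > 1")
    case True
    then have "GR s p m t = 0" by (rule G_supp[OF assms])
    moreover have "norm (GR s p m 0) \<le> C" using C by auto
    ultimately show ?thesis by simp
  next
    case False then have "t \<in> {-1..1}" by auto
    then show ?thesis using C[of "GR s p m t"] by auto
  qed
  then show ?thesis by blast
qed

lemma G_bounded_all: assumes "0 < s" "s < 1"
  shows "\<exists>C\<ge>1. \<forall>m\<le>N. \<forall>t. \<bar>GR s p m t\<bar> / cnz \<le> C"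
proof (induction N)
  case 0
  obtain C where "\<forall>t. \<bar>GR s p 0 t\<bar> \<le> C" using G_bounded[OF assms] by blast
  then have "\<forall>t. \<bar>GR s p 0 t\<bar> / cnz \<le> max 1 (C / cnz)"
    using c0_pos by (meson divide_right_mono less_imp_le max.coboundedI2)
  then show ?case by (intro exI[of _ "max 1 (C / cnz)"]) auto
next
  case (Suc N)
  obtain C1 where C1: "C1 \<ge> 1" "\<forall>m\<le>N. \<forall>t. \<bar>GR s p m t\<bar> / cnz \<le> C1" using Suc by blast
  obtain C where "\<forall>t. \<bar>GR s p (Suc N) t\<bar> \<le> C" using G_bounded[OF assms] by blast
  then have C2: "\<forall>t. \<bar>GR s p (Suc N) t\<bar> / cnz \<le> max C1 (C / cnz)"
    using c0_pos by (meson divide_right_mono less_imp_le max.coboundedI2)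
  have "\<forall>m\<le>Suc N. \<forall>t. \<bar>GR s p m t\<bar> / cnz \<le> max C1 (C / cnz)"
  proof (intro allI impI)
    fix m t assume "m \<le> Suc N"
    then consider "m \<le> N" | "m = Suc N" by linarith
    then show "\<bar>GR s p m t\<bar> / cnz \<le> max C1 (C / cnz)"
    proof cases
      case 1 then show ?thesis using C1 by (meson max.coboundedI1)
    next
      case 2 then show ?thesis using C2 by simp
    qed
  qed
  then show ?case using C1 by (intro exI[of _ "max C1 (C / cnz)"]) auto
qed


lemma count_concat_rep:
  "distinct xs \<Longrightarrow> count_list (concat (map (\<lambda>j. replicate (\<alpha> j) j) xs)) i = (if i \<in> set xs then \<alpha> i else 0)"
proof (induction xs)
  case Nil then show ?case by simp
next
  case (Cons j xs)
  have r: "count_list (replicate m j) i = (if j = i then m else 0)" for m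
    by (induction m) auto
  have "count_list (concat (map (\<lambda>j. replicate (\<alpha> j) j) (j # xs))) i
     = count_list (replicate (\<alpha> j) j) i + count_list (concat (map (\<lambda>j. replicate (\<alpha> j) j) xs)) i"
    by simp
  also have "\<dots> = (if j = i then \<alpha> j else 0) + (if i \<in> set xs then \<alpha> i else 0)"
    using Cons by (simp only: r) simp
  finally show ?case using Cons.prems by auto
qed

lemma exists_count_list: "\<exists>ds. \<forall>i. count_list ds i = (\<alpha> :: 'n::finite \<Rightarrow> nat) i"
proof -
  obtain xs :: "'n list" where xs: "set xs = UNIV" "distinct xs" using finite_distinct_list[of "UNIV :: 'n set"] by auto
  show ?thesis using count_concat_rep[OF xs(2), of \<alpha>] xs(1) by (intro exI[of _ "concat (map (\<lambda>j. replicate (\<alpha> j) j) xs)"]) auto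
qed

definition Pf :: "real \<Rightarrow> nat \<Rightarrow> real \<Rightarrow> ('n::finite \<Rightarrow> nat) \<Rightarrow> real^'n \<Rightarrow> real" where
  "Pf s n a k x = (\<Prod>i\<in>UNIV. HH s n a (k i) (x$i))"

lemma axis_line_nth: "(x + t *\<^sub>R axis i 1) $ j = (if j = i then x $ j + t else (x $ j :: real))"
  by (simp add: axis_def)

context
  fixes s a :: real and n :: nat
  assumes s0: "0 < s" and s1: "s < 1" and a0: "0 < a"
begin

lemma Pf_line: "Pf s n a k (x + t *\<^sub>R axis i 1) = HH s n a (k i) (x$i + t) * (\<Prod>j\<in>UNIV-{i}. HH s n a (k j) (x$j))"
proof -
  have "Pf s n a k (x + t *\<^sub>R axis i 1) = HH s n a (k i) ((x + t *\<^sub>R axis i 1)$i) * (\<Prod>j\<in>UNIV-{i}. HH s n a (k j) ((x + t *\<^sub>R axis i 1)$j))"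
    unfolding Pf_def by (rule prod.remove) auto
  also have "(\<Prod>j\<in>UNIV-{i}. HH s n a (k j) ((x + t *\<^sub>R axis i 1)$j)) = (\<Prod>j\<in>UNIV-{i}. HH s n a (k j) (x$j))"
    by (rule prod.cong) (auto simp: axis_def)
  finally show ?thesis by (simp add: axis_line_nth)
qed

lemma Pf_deriv: "((\<lambda>t. Pf s n a k (x + t *\<^sub>R axis i 1)) has_real_derivative Pf s n a (k(i := Suc (k i))) x) (at 0)"
proof -
  define c where "c = (\<Prod>j\<in>UNIV-{i}. HH s n a (k j) (x$j))"
  have d: "\<And>y. (HH s n a (k i) has_real_derivative HH s n a (Suc (k i)) y) (at y)"
    using sm_HH[OF s0 s1 a0] by (simp add: sm_def)
  have "((\<lambda>t. HH s n a (k i) (1 * t + x$i)) has_real_derivative 1 * HH s n a (Suc (k i)) (1 * 0 + x$i)) (at 0)"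
    by (rule DERIV_affine_comp[OF d])
  then have "((\<lambda>t. HH s n a (k i) (x$i + t)) has_real_derivative HH s n a (Suc (k i)) (x$i)) (at 0)"
    by (simp add: add.commute)
  from DERIV_mult[OF this DERIV_const[of c]]
  have "((\<lambda>t. HH s n a (k i) (x$i + t) * c) has_real_derivative HH s n a (Suc (k i)) (x$i) * c) (at 0)"
    by simp
  moreover have "Pf s n a (k(i := Suc (k i))) x = HH s n a (Suc (k i)) (x$i) * c"
  proof -
    have "Pf s n a (k(i := Suc (k i))) x = HH s n a ((k(i := Suc (k i))) i) (x$i) * (\<Prod>j\<in>UNIV-{i}. HH s n a ((k(i := Suc (k i))) j) (x$j))"
      unfolding Pf_def by (rule prod.remove) auto
    also have "(\<Prod>j\<in>UNIV-{i}. HH s n a ((k(i := Suc (k i))) j) (x$j)) = c"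
      unfolding c_def by (rule prod.cong) auto
    finally show ?thesis by (simp only: fun_upd_same)
  qed
  ultimately show ?thesis unfolding Pf_line c_def by simp
qed

lemma pdiff_Pf: "pdiff i (\<lambda>x. complex_of_real (Pf s n a k x)) = (\<lambda>x. complex_of_real (Pf s n a (k(i := Suc (k i))) x))"
  unfolding pdiff_def
proof (rule ext)
  fix x
  show "vector_derivative (\<lambda>t. complex_of_real (Pf s n a k (x + t *\<^sub>R axis i 1))) (at 0) = complex_of_real (Pf s n a (k(i := Suc (k i))) x)"
    by (rule vector_derivative_at, rule has_vector_derivative_of_real, rule Pf_deriv)
qed

lemma iter_Pf: fixes ds :: "'n::finite list" shows "iter_pd ds (\<lambda>x. complex_of_real (Pf s n a (\<lambda>_. 0) x)) = (\<lambda>x. complex_of_real (Pf s n a (\<lambda>j. count_list ds j) x))"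
proof (induction ds)
  case Nil then show ?case by simp
next
  case (Cons i ds)
  have "(\<lambda>j. count_list (i # ds) j) = (\<lambda>j. count_list ds j)(i := Suc (count_list ds i))"
    by (auto simp: fun_eq_iff)
  then show ?case using Cons by (simp add: pdiff_Pf)
qed

lemma Pf_cont: "continuous_on UNIV (\<lambda>x. complex_of_real (Pf s n a k x))"
  unfolding Pf_def
  by (intro continuous_intros continuous_on_compose2[OF HH_cont[OF s0 s1 a0]] continuous_on_component) auto

lemma Pf_smooth: "smooth_fun (\<lambda>x::real^'n::finite. complex_of_real (Pf s n a (\<lambda>_. 0) x))"
  unfolding smooth_fun_def iter_Pf
proof (intro allI conjI)
  fix ds :: "'n list"
  show "continuous_on UNIV (\<lambda>x. complex_of_real (Pf s n a (\<lambda>j. count_list ds j) x))" by (rule Pf_cont)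
  fix i x
  show "(\<lambda>t. complex_of_real (Pf s n a (\<lambda>j. count_list ds j) (x + t *\<^sub>R axis i 1))) differentiable at 0"
    by (rule differentiableI_vector, rule has_vector_derivative_of_real, rule Pf_deriv)
qed

lemma mpd_Pf: "mpd \<alpha> (\<lambda>x. complex_of_real (Pf s n a (\<lambda>_. 0) x)) = (\<lambda>x. complex_of_real (Pf s n a \<alpha> x))"
proof -
  define ds where "ds = (SOME ds. \<forall>i. count_list ds i = \<alpha> i)"
  have "\<forall>i. count_list ds i = \<alpha> i" unfolding ds_def using exists_count_list[of \<alpha>] by (rule someI_ex)
  then have "(\<lambda>j. count_list ds j) = \<alpha>" by auto
  then show ?thesis unfolding mpd_def ds_def[symmetric] iter_Pf by simp
qed

lemma Pf_supp: fixes x :: "real^'n::finite" shows "Pf s n a k x \<noteq> 0 \<Longrightarrow> norm x \<le> real CARD('n) * a"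
proof -
  assume nz: "Pf s n a k x \<noteq> 0"
  have "\<bar>x$i\<bar> \<le> a" for i
  proof (rule ccontr)
    assume "\<not> \<bar>x$i\<bar> \<le> a"
    then have "HH s n a (k i) (x$i) = 0" by (intro HH_supp[OF s0 s1 a0]) simp
    then have "Pf s n a k x = 0" unfolding Pf_def by (intro prod_zero) auto
    then show False using nz by simp
  qed
  then have "(\<Sum>i\<in>UNIV. \<bar>x$i\<bar>) \<le> real CARD('n) * a" using sum_bounded_above[of UNIV "\<lambda>i. \<bar>x$i\<bar>" a] by simp
  then show ?thesis using norm_le_l1_cart[of x] by simp
qed

lemma Pf_even: "Pf s n a (\<lambda>_. 0) (- x) = Pf s n a (\<lambda>_. 0) x"
  unfolding Pf_def using HH_even[OF s0 s1 a0] by simp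

end


lemma Rad_eq: assumes "\<exists>x. f x \<noteq> 0" shows "Rad f = Sup {norm x | x. f x \<noteq> 0}"
  using assms unfolding Rad_def by auto

lemma Rad_le:
  assumes "\<exists>x. f x \<noteq> 0" "\<And>x. f x \<noteq> 0 \<Longrightarrow> norm x \<le> R"
  shows "Rad f \<le> R"
  unfolding Rad_eq[OF assms(1)] using assms by (intro cSup_least) auto

lemma Rad_ge:
  assumes "bounded {x. f x \<noteq> 0}" "f x \<noteq> 0"
  shows "norm x \<le> Rad f"
proof -
  have "bdd_above {norm x | x. f x \<noteq> 0}"
  proof -
    obtain BD where "\<And>y. y \<in> {x. f x \<noteq> 0} \<Longrightarrow> norm y \<le> BD" using assms(1) by (meson bounded_iff)
    then show ?thesis by (auto intro!: bdd_aboveI[of _ BD])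
  qed
  moreover have ex: "\<exists>x. f x \<noteq> 0" using assms(2) by auto
  ultimately show ?thesis unfolding Rad_eq[OF ex] using assms(2) by (intro cSup_upper) auto
qed

lemma Rad_pos:
  fixes f :: "real^'n::finite \<Rightarrow> complex"
  assumes "bounded {x. f x \<noteq> 0}" "integral UNIV f \<noteq> 0"
  shows "Rad f > 0"
proof (cases "\<exists>x. f x \<noteq> 0")
  case False then show ?thesis by (simp add: Rad_def)
next
  case True
  show ?thesis
  proof (rule ccontr)
    assume "\<not> Rad f > 0"
    then have "\<And>x. f x \<noteq> 0 \<Longrightarrow> x = 0" using Rad_ge[OF assms(1)]
      by (metis norm_le_zero_iff order.trans not_less)
    then have z: "\<And>x. x \<noteq> 0 \<Longrightarrow> f x = 0" by blast
    have "integral UNIV f = integral UNIV (\<lambda>x. 0::complex)"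
      using integral_spike[OF negligible_sing[of 0], of UNIV "\<lambda>x. 0::complex" f] z by auto
    then show False using assms(2) by simp
  qed
qed

context
  fixes s a :: real and n :: nat
  assumes s0: "0 < s" and s1: "s < 1" and a0: "0 < a"
begin

lemma int_Pf_gen:
  fixes F :: "real \<Rightarrow> real" and x :: "real^'n::finite"
  assumes "\<And>i. integrable lborel (f i)"
  shows "integral UNIV (\<lambda>x::real^'n. complex_of_real (\<Prod>i\<in>UNIV. f i (x$i))) = complex_of_real (\<Prod>i\<in>UNIV. \<integral>t. f i t \<partial>lborel)"
proof -
  have i: "integrable lborel (\<lambda>x::real^'n. \<Prod>i\<in>UNIV. f i (x$i))" by (rule prod_integral_cart(1)[OF assms])
  have "integral UNIV (\<lambda>x::real^'n. complex_of_real (\<Prod>i\<in>UNIV. f i (x$i))) = (\<integral>x. complex_of_real (\<Prod>i\<in>UNIV. f i ((x::real^'n)$i)) \<partial>lborel)"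
    by (rule integral_lborel, rule integrable_of_real[OF i])
  also have "\<dots> = complex_of_real (\<integral>x. (\<Prod>i\<in>UNIV. f i ((x::real^'n)$i)) \<partial>lborel)" by (rule integral_complex_of_real)
  also have "\<dots> = complex_of_real (\<Prod>i\<in>UNIV. \<integral>t. f i t \<partial>lborel)" by (simp add: prod_integral_cart(2)[OF assms])
  finally show ?thesis .
qed

lemma Pf_integral: "integral UNIV (\<lambda>x::real^'n::finite. complex_of_real (Pf s n a (\<lambda>_. 0) x)) = 1"
proof -
  have "integral UNIV (\<lambda>x::real^'n::finite. complex_of_real (Pf s n a (\<lambda>_. 0) x))
       = complex_of_real (\<Prod>i\<in>(UNIV::'n set). \<integral>t. HH s n a 0 t \<partial>lborel)"
    unfolding Pf_def using int_HH[OF s0 s1 a0, where j=0 and m=0] by (intro int_Pf_gen) simp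
  also have "\<dots> = 1" by (simp add: HH_int1[OF s0 s1 a0])
  finally show ?thesis .
qed

lemma Pf_moment:
  fixes \<alpha> :: "'n::finite \<Rightarrow> nat"
  assumes "1 \<le> mabs \<alpha>" "mabs \<alpha> \<le> n"
  shows "integral UNIV (\<lambda>x::real^'n. complex_of_real (mono_pow x \<alpha>) * complex_of_real (Pf s n a (\<lambda>_. 0) x)) = 0"
proof -
  obtain i0 where i0: "\<alpha> i0 \<noteq> 0" using assms(1) unfolding mabs_def by (metis not_one_le_zero sum.neutral)
  have le: "\<alpha> i0 \<le> mabs \<alpha>" unfolding mabs_def by (rule member_le_sum) auto
  have eq: "complex_of_real (mono_pow x \<alpha>) * complex_of_real (Pf s n a (\<lambda>_. 0) x)
      = complex_of_real (\<Prod>i\<in>UNIV. (x$i) ^ \<alpha> i * HH s n a 0 (x$i))" for x :: "real^'n"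
    by (simp add: mono_pow_def Pf_def prod.distrib)
  have "integral UNIV (\<lambda>x::real^'n. complex_of_real (mono_pow x \<alpha>) * complex_of_real (Pf s n a (\<lambda>_. 0) x))
      = complex_of_real (\<Prod>i\<in>UNIV. \<integral>t. t ^ \<alpha> i * HH s n a 0 t \<partial>lborel)"
    unfolding eq by (intro int_Pf_gen int_HH[OF s0 s1 a0])
  also have "(\<Prod>i\<in>UNIV. \<integral>t. t ^ \<alpha> i * HH s n a 0 t \<partial>lborel) = 0"
  proof -
    have "(\<integral>t. t ^ \<alpha> i0 * HH s n a 0 t \<partial>lborel) = 0"
      by (rule HH_mom0[OF s0 s1 a0]) (use i0 le assms(2) in auto)
    then show ?thesis by (intro prod_zero) (auto intro!: bexI[of _ i0])
  qed
  finally show ?thesis by simp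
qed

lemma Pf_L1:
  "integral UNIV (\<lambda>x::real^'n::finite. cmod (complex_of_real (Pf s n a (\<lambda>_. 0) x))) \<le> (((1 + s) / (1 - s)) ^ n) ^ CARD('n)"
proof -
  have i: "integrable lborel (\<lambda>x::real^'n. \<Prod>i\<in>UNIV. \<bar>HH s n a 0 (x$i)\<bar>)"
    by (rule prod_integral_cart(1)) (rule int_HH_abs[OF s0 s1 a0])
  have "integral UNIV (\<lambda>x::real^'n::finite. cmod (complex_of_real (Pf s n a (\<lambda>_. 0) x)))
      = integral UNIV (\<lambda>x::real^'n. \<Prod>i\<in>UNIV. \<bar>HH s n a 0 (x$i)\<bar>)"
    by (simp only: norm_of_real Pf_def abs_prod)
  also have "\<dots> = (\<integral>x. (\<Prod>i\<in>UNIV. \<bar>HH s n a 0 ((x::real^'n)$i)\<bar>) \<partial>lborel)"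
    by (rule integral_lborel[OF i])
  also have "\<dots> = (\<Prod>i\<in>(UNIV::'n set). \<integral>t. \<bar>HH s n a 0 t\<bar> \<partial>lborel)"
    by (rule prod_integral_cart(2)) (rule int_HH_abs[OF s0 s1 a0])
  also have "\<dots> \<le> (\<Prod>i\<in>(UNIV::'n set). ((1 + s) / (1 - s)) ^ n)"
    by (intro prod_mono conjI HH_abs[OF s0 s1 a0]) simp
  also have "\<dots> = (((1 + s) / (1 - s)) ^ n) ^ CARD('n)" by simp
  finally show ?thesis .
qed

lemma Pf_dbound:
  fixes \<alpha> :: "'n::finite \<Rightarrow> nat" and x :: "real^'n"
  assumes C: "\<forall>m\<le>n. \<forall>t. \<bar>GR s n m t\<bar> / cnz \<le> C" and al: "mabs \<alpha> \<le> n"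
  shows "\<bar>Pf s n a \<alpha> x\<bar> \<le> C ^ CARD('n) / a ^ (mabs \<alpha> + CARD('n))"
proof -
  have b: "\<bar>HH s n a (\<alpha> i) (x$i)\<bar> \<le> C / a ^ (\<alpha> i + 1)" for i
  proof -
    have "\<alpha> i \<le> mabs \<alpha>" unfolding mabs_def by (rule member_le_sum) auto
    then have "\<bar>GR s n (\<alpha> i) (x$i / a)\<bar> / cnz \<le> C" using C al by auto
    then have "\<bar>GR s n (\<alpha> i) (x$i / a)\<bar> / cnz / a ^ (\<alpha> i + 1) \<le> C / a ^ (\<alpha> i + 1)"
      using a0 by (intro divide_right_mono) auto
    moreover have "\<bar>HH s n a (\<alpha> i) (x$i)\<bar> = \<bar>GR s n (\<alpha> i) (x$i / a)\<bar> / cnz / a ^ (\<alpha> i + 1)"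
      using a0 c0_pos by (simp add: HH_def abs_divide)
    ultimately show ?thesis by simp
  qed
  have "\<bar>Pf s n a \<alpha> x\<bar> = (\<Prod>i\<in>UNIV. \<bar>HH s n a (\<alpha> i) (x$i)\<bar>)" by (simp add: Pf_def abs_prod)
  also have "\<dots> \<le> (\<Prod>i\<in>(UNIV::'n set). C / a ^ (\<alpha> i + 1))"
    by (intro prod_mono conjI b) simp
  also have "\<dots> = C ^ CARD('n) / (\<Prod>i\<in>(UNIV::'n set). a ^ (\<alpha> i + 1))"
    by (simp add: prod_dividef)
  also have "(\<Prod>i\<in>(UNIV::'n set). a ^ (\<alpha> i + 1)) = a ^ (\<Sum>i\<in>UNIV. \<alpha> i + 1)"
    by (simp add: power_sum)
  also have "(\<Sum>i\<in>(UNIV::'n set). \<alpha> i + 1) = mabs \<alpha> + CARD('n)"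
    by (simp add: mabs_def sum_Suc)
  finally show ?thesis .
qed

end


lemma exists_s:
  fixes q :: real and n d :: nat
  assumes "q > 1"
  shows "\<exists>s. 0 < s \<and> s < 1 \<and> (((1 + s) / (1 - s)) ^ n) ^ d \<le> q"
proof -
  have "((\<lambda>s::real. (((1 + s) / (1 - s)) ^ n) ^ d) \<longlongrightarrow> (((1 + 0) / (1 - 0)) ^ n) ^ d) (at_right 0)"
    by (intro tendsto_intros) auto
  then have "((\<lambda>s::real. (((1 + s) / (1 - s)) ^ n) ^ d) \<longlongrightarrow> 1) (at_right 0)" by simp
  from order_tendstoD(2)[OF this assms]
  obtain b where b: "b > 0" "\<And>y. y > 0 \<Longrightarrow> y < b \<Longrightarrow> (((1 + y) / (1 - y)) ^ n) ^ d < q"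
    unfolding eventually_at_right_field by auto
  define y where "y = min (b/2) (1/2)"
  have "y > 0" "y < b" "y < 1" using b by (auto simp: y_def)
  then show ?thesis using b(2)[of y] by (intro exI[of _ y]) auto
qed

lemma final_ineq:
  fixes D dd a R :: real and N :: nat
  assumes D: "D \<ge> 1" and dd: "dd \<ge> 1" and N: "N \<ge> 1" and a: "a > 0"
    and Ka: "D * dd^2 * a \<le> 1" and R: "0 < R" "R \<le> dd * a"
  shows "D / a ^ N \<le> inverse (R ^ (2 * N))"
proof -
  have "R ^ (2 * N) \<le> (dd * a) ^ (2 * N)" using R by (intro power_mono) auto
  then have "D * R ^ (2 * N) \<le> D * (dd * a) ^ (2 * N)" using D by (intro mult_left_mono) auto
  also have "D * (dd * a) ^ (2 * N) = D * (dd^2 * a) ^ N * a ^ N"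
    by (simp add: power_mult power_mult_distrib power2_eq_square mult_ac)
  also have "\<dots> \<le> D ^ N * (dd^2 * a) ^ N * a ^ N"
  proof -
    have "D \<le> D ^ N" using D N by (metis One_nat_def power_increasing power_one_right)
    then show ?thesis using a dd by (intro mult_right_mono) auto
  qed
  also have "\<dots> = (D * dd^2 * a) ^ N * a ^ N" by (simp add: power_mult_distrib mult_ac)
  also have "\<dots> \<le> 1 * a ^ N"
  proof (rule mult_right_mono)
    show "(D * dd\<^sup>2 * a) ^ N \<le> 1" using Ka D dd a by (intro power_le_one) auto
  qed (use a in auto)
  finally have "D * R ^ (2 * N) \<le> a ^ N" by simp
  then show ?thesis using R a by (simp add: field_simps)
qed

lemma Dn_nonempty:
  assumes n1: "n \<ge> 1"
  shows "(Dn n :: (real^'n::finite \<Rightarrow> complex) set) \<noteq> {}"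
proof -
  define d where "d = CARD('n)"
  have d1: "real d \<ge> 1" using d_def by simp
  have n0: "real n > 0" using n1 by simp
  obtain s where s0: "0 < s" and s1: "s < 1" and sq: "(((1 + s) / (1 - s)) ^ n) ^ d \<le> 1 + 1 / real n"
    using exists_s[of "1 + 1 / real n" n d] n0 by auto
  obtain C where C1: "C \<ge> 1" and C: "\<forall>m\<le>n. \<forall>t. \<bar>GR s n m t\<bar> / cnz \<le> C"
    using G_bounded_all[OF s0 s1, of n n] by auto
  define D where "D = C ^ d"
  have D1: "D \<ge> 1" using C1 by (simp add: D_def)
  define a where "a = 1 / (D * real d ^ 2 * real n)"
  have a0: "a > 0" using D1 d1 n0 by (simp add: a_def)
  have Ka: "D * real d ^ 2 * a \<le> 1" using D1 d1 n1 by (simp add: a_def field_simps)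
  have da: "real d * a \<le> 1 / real n"
  proof -
    have "real d * a = 1 / (D * real d * real n)" using d1 by (simp add: a_def power2_eq_square)
    also have "\<dots> \<le> 1 / real n"
    proof (intro divide_left_mono)
      have "1 * 1 \<le> D * real d" using D1 d1 by (intro mult_mono) auto
      then have "1 * real n \<le> D * real d * real n" using n0 by (intro mult_right_mono) auto
      then show "real n \<le> D * real d * real n" by simp
    qed (use n0 D1 d1 in auto)
    finally show ?thesis .
  qed
  define \<phi> where "\<phi> = (\<lambda>x::real^'n. complex_of_real (Pf s n a (\<lambda>_. 0) x))"
  have supp: "\<And>x. \<phi> x \<noteq> 0 \<Longrightarrow> norm x \<le> real d * a"
    unfolding \<phi>_def d_def using Pf_supp[OF s0 s1 a0] by auto
  have bnd: "bounded {x. \<phi> x \<noteq> 0}"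
    unfolding bounded_iff using supp by auto
  have int1: "integral UNIV \<phi> = 1" unfolding \<phi>_def by (rule Pf_integral[OF s0 s1 a0])
  have ex: "\<exists>x. \<phi> x \<noteq> 0"
  proof (rule ccontr)
    assume "\<not> ?thesis" then have "\<phi> = (\<lambda>x. 0)" by auto
    then show False using int1 by simp
  qed
  have Rpos: "Rad \<phi> > 0" by (rule Rad_pos[OF bnd]) (simp add: int1)
  have Rle: "Rad \<phi> \<le> real d * a" by (rule Rad_le[OF ex supp])
  have nz: "n \<noteq> 0" using n1 by simp
  have "\<phi> \<in> Dn n"
    unfolding Dn_def if_not_P[OF nz]
  proof (simp only: mem_Collect_eq, intro conjI allI impI)
    show "\<phi> \<in> D0" unfolding D0_def using bnd Pf_smooth[OF s0 s1 a0] by (simp add: \<phi>_def)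
    show "\<And>x. Im (\<phi> x) = 0" by (simp add: \<phi>_def)
    show "\<And>x. \<phi> (- x) = \<phi> x" by (simp add: \<phi>_def Pf_even[OF s0 s1 a0])
    show "Rad \<phi> \<le> 1 / real n" using Rle da by simp
    show "integral UNIV \<phi> = 1" by (rule int1)
    fix \<alpha> :: "'n \<Rightarrow> nat"
    assume "1 \<le> mabs \<alpha> \<and> mabs \<alpha> \<le> n"
    then show "integral UNIV (\<lambda>x. complex_of_real (mono_pow x \<alpha>) * \<phi> x) = 0"
      unfolding \<phi>_def by (intro Pf_moment[OF s0 s1 a0]) auto
  next
    show "integral UNIV (\<lambda>x. cmod (\<phi> x)) \<le> 1 + 1 / real n"
      using order.trans[OF Pf_L1[OF s0 s1 a0] sq[unfolded d_def]] unfolding \<phi>_def .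
  next
    fix \<alpha> :: "'n \<Rightarrow> nat" and x :: "real^'n"
    assume al: "mabs \<alpha> \<le> n"
    have "cmod (mpd \<alpha> \<phi> x) = \<bar>Pf s n a \<alpha> x\<bar>"
      unfolding \<phi>_def mpd_Pf[OF s0 s1 a0] by simp
    also have "\<dots> \<le> C ^ CARD('n) / a ^ (mabs \<alpha> + CARD('n))"
      by (rule Pf_dbound[OF s0 s1 a0 C al])
    also have "\<dots> \<le> inverse (Rad \<phi> ^ (2 * (mabs \<alpha> + CARD('n))))"
      unfolding d_def[symmetric] D_def[symmetric]
    proof (rule final_ineq[OF D1 d1 _ a0 Ka Rpos Rle])
      have "CARD('n) \<ge> 1" by (simp add: Suc_leI)
      then show "1 \<le> mabs \<alpha> + d" unfolding d_def by linarith
    qed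
    finally show "cmod (mpd \<alpha> \<phi> x) \<le> inverse (Rad \<phi> ^ (2 * (mabs \<alpha> + CARD('n))))" .
  qed
  then show ?thesis by auto
qed

lemma Dn_mono: "(Dn (Suc n) :: (real^'n::finite \<Rightarrow> complex) set) \<subseteq> Dn n"
proof (cases "n = 0")
  case True then show ?thesis by (auto simp: Dn_def)
next
  case False
  have le: "1 / real (Suc n) \<le> 1 / real n" using False by (simp add: frac_le)
  show ?thesis
  proof
    fix \<phi> :: "real^'n \<Rightarrow> complex" assume "\<phi> \<in> Dn (Suc n)"
    have ns: "Suc n \<noteq> 0" by simp
    from \<open>\<phi> \<in> Dn (Suc n)\<close> have h: "\<phi> \<in> D0 \<and> (\<forall>x. Im (\<phi> x) = 0) \<and> (\<forall>x. \<phi> (- x) = \<phi> x) \<and> Rad \<phi> \<le> 1 / real (Suc n) \<and>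
        integral UNIV \<phi> = 1 \<and>
        (\<forall>\<alpha>. 1 \<le> mabs \<alpha> \<and> mabs \<alpha> \<le> Suc n \<longrightarrow> integral UNIV (\<lambda>x. complex_of_real (mono_pow x \<alpha>) * \<phi> x) = 0) \<and>
        integral UNIV (\<lambda>x. cmod (\<phi> x)) \<le> 1 + 1 / real (Suc n) \<and>
        (\<forall>\<alpha>. mabs \<alpha> \<le> Suc n \<longrightarrow> (\<forall>x. cmod (mpd \<alpha> \<phi> x) \<le> inverse (Rad \<phi> ^ (2 * (mabs \<alpha> + CARD('n))))))"
      using Dn_def[where 'n='n] if_not_P[OF ns] by simp
    show "\<phi> \<in> Dn n"
      unfolding Dn_def if_not_P[OF False] mem_Collect_eq
      using h le by (intro conjI allI impI) (auto)
  qed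
qed

lemma Dn_Inter: "(\<Inter>n. (Dn n :: (real^'n::finite \<Rightarrow> complex) set)) = {}"
proof (rule ccontr)
  assume "\<not> ?thesis"
  then obtain \<phi> :: "real^'n \<Rightarrow> complex" where all: "\<And>n. \<phi> \<in> Dn n" by auto
  have h1: "\<phi> \<in> D0" "integral UNIV \<phi> = 1"
    using all[of 1] unfolding Dn_def by auto
  have bnd: "bounded {x. \<phi> x \<noteq> 0}"
    using h1(1) unfolding D0_def by simp
  have R: "Rad \<phi> > 0" by (rule Rad_pos[OF bnd]) (simp add: h1)
  obtain n :: nat where n: "1 / Rad \<phi> < real n" using reals_Archimedean2 by blast
  have n0: "real n > 0" using n R by (meson less_trans zero_less_divide_1_iff)
  then have "n \<noteq> 0" by simp
  then have "Rad \<phi> \<le> 1 / real n" using all[of n] unfolding Dn_def by auto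
  moreover have "1 / real n < Rad \<phi>" using n R n0 by (simp add: field_simps)
  ultimately show False by simp
qed

theorem theorem2p2:
  shows "(\<forall>n. (Dn (Suc n) :: (real^'n::finite \<Rightarrow> complex) set) \<subseteq> Dn n)
    \<and> (\<forall>n\<ge>1. (Dn n :: (real^'n \<Rightarrow> complex) set) \<noteq> {})
    \<and> (\<Inter>n. (Dn n :: (real^'n \<Rightarrow> complex) set)) = {}"
  using Dn_mono Dn_nonempty Dn_Inter by blast

end
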